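(* Let $\mathbb{K}\in\{\mathbb{R},\mathbb{C}\}$ and let $X$ be an infinite-dimensional normed vector space over $\mathbb{K}$. Suppose $o(X)=|X|=\dim X$. Then there exists a family $\mathcal{B}$ of (Hamel) bases of $X$ such that $|\mathcal{B}|=2^{|X|}$ and every element of $\mathcal{B}$ is a connected, locally connected and dense subset of $X$.
   Context: $|S|$ denotes the cardinality of a set $S$. $\dim X$ denotes the algebraic (Hamel) dimension of $X$, i.e. the cardinality of an algebraic basis of $X$ over $\mathbb{K}$. $o(X)$ denotes the cardinality of the family of all open subsets of $X$ (with respect to the norm topology). A basis always means an algebraic (Hamel) basis; topological notions refer to the norm topology and induced subspace topologies. *)

theory Defs
  imports "HOL-Analysis.Analysis" "HOL-Library.Equipollence"
begin

definition hamel_basis :: "('k::field \<Rightarrow> 'a::ab_group_add \<Rightarrow> 'a) \<Rightarrow> 'a set \<Rightarrow> bool" where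
  "hamel_basis sc B \<longleftrightarrow> \<not> module.dependent sc B \<and> module.span sc B = UNIV"

definition complex_normed_structure :: "(complex \<Rightarrow> 'a::real_normed_vector \<Rightarrow> 'a) \<Rightarrow> bool" where
  "complex_normed_structure sc \<longleftrightarrow> vector_space sc
     \<and> (\<forall>r x. sc (complex_of_real r) x = scaleR r x)
     \<and> (\<forall>c x. norm (sc c x) = cmod c * norm x)"

end

theory Submission
  imports Defs "HOL-Algebra.Free_Abelian_Groups"
begin

definition fam :: "'a::real_normed_vector set set" where
  "fam = {G - (A \<union> B) | G A B. open G \<and> convex G \<and> open A \<and> open B \<and> G \<noteq> {} \<and>
      ((A = {} \<and> B = {}) \<or> (G \<inter> A \<noteq> {} \<and> G \<inter> B \<noteq> {} \<and> G \<inter> A \<inter> B = {}))}"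

lemma fam_open:
  assumes "open G" "convex G" "G \<noteq> {}" shows "G \<in> fam"
proof -
  have "G = G - ({} \<union> {})" by simp
  then show ?thesis unfolding fam_def using assms by blast
qed

lemma fam_sep:
  assumes "open G" "convex G" "open A" "open B" "G \<inter> A \<noteq> {}" "G \<inter> B \<noteq> {}" "G \<inter> A \<inter> B = {}"
  shows "G - (A \<union> B) \<in> fam"
  unfolding fam_def using assms by blast

lemma meets_open:
  fixes D :: "'a::real_normed_vector set"
  assumes "\<forall>F\<in>fam. D \<inter> F \<noteq> {}" "open S" "S \<noteq> {}"
  shows "D \<inter> S \<noteq> {}"
proof -
  obtain x where x: "x \<in> S" using assms by blast
  then obtain e where e: "e > 0" "ball x e \<subseteq> S" using assms(2) open_contains_ball by blast
  have "ball x e \<in> fam" using fam_open[of "ball x e"] e by simp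
  then show ?thesis using assms(1) e by blast
qed

lemma meets_conn:
  fixes D :: "'a::real_normed_vector set"
  assumes m: "\<forall>F\<in>fam. D \<inter> F \<noteq> {}" and G: "open G" "convex G"
  shows "connected (D \<inter> G)"
  unfolding connected_def
proof (rule notI, elim exE conjE)
  fix A B assume A: "open A" and B: "open B" and cov: "D \<inter> G \<subseteq> A \<union> B"
    and dis: "A \<inter> B \<inter> (D \<inter> G) = {}" and a: "A \<inter> (D \<inter> G) \<noteq> {}" and b: "B \<inter> (D \<inter> G) \<noteq> {}"
  have GAB: "G \<inter> A \<inter> B = {}"
  proof (rule ccontr)
    assume ne: "G \<inter> A \<inter> B \<noteq> {}"
    have op: "open (G \<inter> A \<inter> B)" using G A B by auto
    have "D \<inter> (G \<inter> A \<inter> B) \<noteq> {}" by (rule meets_open[OF m op ne])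
    moreover have "D \<inter> (G \<inter> A \<inter> B) = A \<inter> B \<inter> (D \<inter> G)" by auto
    ultimately show False using dis by simp
  qed
  have a': "G \<inter> A \<noteq> {}" using a by auto
  have b': "G \<inter> B \<noteq> {}" using b by auto
  have "G - (A \<union> B) \<in> fam" by (rule fam_sep[OF G A B a' b' GAB])
  then have "D \<inter> (G - (A \<union> B)) \<noteq> {}" using m by auto
  then show False using cov by auto
qed

lemma meets_good:
  fixes D :: "'a::real_normed_vector set"
  assumes m: "\<forall>F\<in>fam. D \<inter> F \<noteq> {}"
  shows "connected D \<and> locally connected D \<and> closure D = UNIV"
proof (intro conjI)
  show "connected D" using meets_conn[OF m, of UNIV] by simp
  show "locally connected D"
    unfolding locally_def
  proof (intro allI impI, elim conjE)
    fix w x assume w: "openin (top_of_set D) w" and x: "x \<in> w"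
    obtain T where T: "open T" "w = D \<inter> T" using w openin_open by blast
    obtain e where e: "e > 0" "ball x e \<subseteq> T" using T x open_contains_ball by blast
    show "\<exists>U V. openin (top_of_set D) U \<and> connected V \<and> x \<in> U \<and> U \<subseteq> V \<and> V \<subseteq> w"
      apply (rule exI[of _ "D \<inter> ball x e"], rule exI[of _ "D \<inter> ball x e"])
      using openin_open_Int[of "ball x e" D] meets_conn[OF m, of "ball x e"] e T x by auto
  qed
  show "closure D = UNIV"
  proof -
    have "x \<in> closure D" for x
      unfolding closure_approachable
    proof (intro allI impI)
      fix e :: real assume "e > 0"
      then have "D \<inter> ball x e \<noteq> {}" using meets_open[OF m, of "ball x e"] by simp
      then show "\<exists>y\<in>D. dist y x < e" by (auto simp: dist_commute)
    qed
    then show ?thesis by auto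
  qed
qed


definition small_set :: "'a set \<Rightarrow> bool" where
  "small_set A \<longleftrightarrow> |A| <o |UNIV :: 'a set|"

lemma lepoll_ordLeq: "A \<lesssim> B \<longleftrightarrow> |A| \<le>o |B|"
  unfolding lepoll_def card_of_ordLeq[symmetric] by simp

lemma wo_max:
  assumes wo: "wo_rel r" and F: "Field r = UNIV" and fin: "finite A" and ne: "A \<noteq> {}"
  shows "\<exists>m\<in>A. \<forall>b\<in>A. (b, m) \<in> r"
  using fin ne
proof (induction rule: finite_ne_induct)
  case (singleton a)
  have "(a, a) \<in> r" using wo_rel.REFL[OF wo] F unfolding refl_on_def by auto
  then show ?case by auto
next
  case (insert a A)
  then obtain m where m: "m \<in> A" "\<forall>b\<in>A. (b, m) \<in> r" by blast
  have tot: "(a, m) \<in> r \<or> (m, a) \<in> r" using wo_rel.TOTALS[OF wo] F by auto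
  have tr: "trans r" using wo_rel.TRANS[OF wo] .
  have aa: "(a, a) \<in> r" using wo_rel.REFL[OF wo] F unfolding refl_on_def by auto
  show ?case
  proof (cases "(m, a) \<in> r")
    case True
    then have "\<forall>b\<in>insert a A. (b, a) \<in> r" using m tr aa unfolding trans_def by blast
    then show ?thesis by blast
  next
    case False
    then have "(a, m) \<in> r" using tot by auto
    then have "\<forall>b\<in>insert a A. (b, m) \<in> r" using m by auto
    then show ?thesis using m by blast
  qed
qed

locale gs = vector_space sc for sc :: "'k::field \<Rightarrow> 'a::real_normed_vector \<Rightarrow> 'a" +
  fixes emb :: "real \<Rightarrow> 'k" and H :: "'a set"
  assumes emb: "\<And>r x. sc (emb r) x = r *\<^sub>R x"
  and nofin: "\<not> (\<exists>B. finite B \<and> hamel_basis sc B)"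
  and opens: "{U::'a set. open U} \<approx> (UNIV::'a set)"
  and Hb: "hamel_basis sc H" and Hc: "H \<approx> (UNIV::'a set)"
begin

lemma span_scaleR: "x \<in> local.span S \<Longrightarrow> r *\<^sub>R x \<in> local.span S"
  using span_scale[of x S "emb r"] by (simp add: emb)

lemma H_indep: "local.independent H" and H_span: "local.span H = UNIV"
  using Hb unfolding hamel_basis_def by auto

lemma inf_H: "infinite H"
proof
  assume f: "finite H"
  have "\<exists>B. finite B \<and> hamel_basis sc B" using f Hb by (intro exI[of _ H]) simp
  with nofin show False by simp
qed

lemma inf_UNIV: "infinite (UNIV::'a set)"
  using inf_H finite_subset[of H UNIV] by auto

lemma small_finite: "finite A \<Longrightarrow> small_set (A::'a set)"
  unfolding small_set_def
  using finite_ordLess_infinite[of "|A|" "|UNIV::'a set|"] inf_UNIV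
  by (simp add: card_of_Well_order)

lemma small_Un: "small_set A \<Longrightarrow> small_set B \<Longrightarrow> small_set (A \<union> (B::'a set))"
  unfolding small_set_def by (rule card_of_Un_ordLess_infinite[OF inf_UNIV])

lemma small_image: "small_set (A::'a set) \<Longrightarrow> small_set (f ` A :: 'a set)"
  unfolding small_set_def by (rule ordLeq_ordLess_trans[OF card_of_image])

lemma small_insert: "small_set A \<Longrightarrow> small_set (insert a (A::'a set))"
  using small_Un[of "{a}" A] small_finite[of "{a}"] by simp

lemma small_underS: "small_set (underS |UNIV::'a set| a)"
  unfolding small_set_def using card_of_underS[OF card_of_Card_order, of a UNIV] by simp

lemma span_fin:
  assumes "z \<in> local.span S" shows "\<exists>t. finite t \<and> t \<subseteq> S \<and> z \<in> local.span t"
proof -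
  obtain t r where t: "finite t" "t \<subseteq> S" "z = (\<Sum>a\<in>t. sc (r a) a)"
    using assms unfolding span_explicit by blast
  have "z \<in> local.span t" unfolding span_explicit using t by blast
  then show ?thesis using t by blast
qed

lemma span_small:
  assumes sm: "small_set P" shows "local.span P \<noteq> UNIV"
proof
  assume sp: "local.span P = UNIV"
  show False
  proof (cases "finite P")
    case True
    then have "finite H" using independent_span_bound[OF True H_indep] sp by auto
    with nofin Hb show False by blast
  next
    case False
    have ex: "\<exists>T. finite T \<and> T \<subseteq> P \<and> h \<in> local.span T" if "h \<in> H" for h
      using span_fin[of h P] sp by auto
    define T where "T h = (SOME T. finite T \<and> T \<subseteq> P \<and> h \<in> local.span T)" for h
    have T: "finite (T h) \<and> T h \<subseteq> P \<and> h \<in> local.span (T h)" if "h \<in> H" for h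
      unfolding T_def by (rule someI_ex[OF ex[OF that]])
    define fib where "fib S = {h \<in> H. T h = S}" for S
    have fibfin: "finite (fib S)" if "finite S" for S
    proof -
      have "fib S \<subseteq> local.span S" using T unfolding fib_def by auto
      moreover have "local.independent (fib S)"
        using independent_mono[OF H_indep] unfolding fib_def by auto
      ultimately show ?thesis using independent_span_bound[OF that] by blast
    qed
    define en where "en S = (SOME f::'a \<Rightarrow> nat. inj_on f (fib S))" for S
    have en: "inj_on (en S) (fib S)" if "finite S" for S
    proof -
      have "\<exists>f::'a\<Rightarrow>nat. inj_on f (fib S)" using fibfin[OF that] finite_imp_inj_to_nat_seg by blast
      then show ?thesis unfolding en_def by (rule someI_ex)
    qed
    define g where "g h = (T h, en (T h) h)" for h
    have "inj_on g H"
    proof (rule inj_onI)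
      fix h h' assume h: "h \<in> H" "h' \<in> H" "g h = g h'"
      then have e1: "T h = T h'" and e2: "en (T h) h = en (T h) h'" unfolding g_def by auto
      have "h \<in> fib (T h)" "h' \<in> fib (T h)" using h e1 unfolding fib_def by auto
      then show "h = h'" using en[of "T h"] T[OF h(1)] e2 inj_onD by metis
    qed
    moreover have "g ` H \<subseteq> Fpow P \<times> (UNIV::nat set)" using T unfolding g_def Fpow_def by auto
    ultimately have "H \<lesssim> Fpow P \<times> (UNIV::nat set)" unfolding lepoll_def by auto
    also have "Fpow P \<times> (UNIV::nat set) \<lesssim> P \<times> P"
      by (rule times_lepoll_mono[OF eqpoll_imp_lepoll[OF eqpoll_Fpow[OF False]]])
         (use False infinite_le_lepoll in blast)
    also have "P \<times> P \<approx> P"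
      using card_of_Times_same_infinite[OF False] eqpoll_iff_card_of_ordIso by blast
    finally have "|H| \<le>o |P|" unfolding lepoll_ordLeq .
    moreover have "|UNIV::'a set| =o |H|"
      using Hc eqpoll_iff_card_of_ordIso ordIso_symmetric by blast
    ultimately have "|UNIV::'a set| <o |UNIV::'a set|"
      using sm unfolding small_set_def
      by (meson ordIso_ordLeq_trans ordLeq_ordLess_trans)
    then show False using ordLess_irreflexive by blast
  qed
qed

lemma open_span:
  assumes op: "open S" and ne: "S \<noteq> {}" and sub: "S \<subseteq> local.span P"
  shows "local.span P = UNIV"
proof -
  obtain x where x: "x \<in> S" using ne by blast
  obtain e where e: "e > 0" "ball x e \<subseteq> S" using op x open_contains_ball by blast
  have xs: "x \<in> local.span P" using x sub by blast
  have "y \<in> local.span P" for y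
  proof (cases "y = 0")
    case True then show ?thesis using span_zero by simp
  next
    case False
    define t where "t = e / (2 * norm y)"
    have t: "t > 0" using e False by (simp add: t_def)
    have "norm (t *\<^sub>R y) = e / 2" using False t e(1) by (simp add: t_def)
    then have "dist x (x + t *\<^sub>R y) < e" using e by (simp add: dist_norm)
    then have "x + t *\<^sub>R y \<in> local.span P" using e sub by auto
    then have "(x + t *\<^sub>R y) - x \<in> local.span P" using span_diff xs by blast
    then have w: "t *\<^sub>R y \<in> local.span P" by simp
    have "(1/t) *\<^sub>R (t *\<^sub>R y) \<in> local.span P" by (rule span_scaleR[OF w])
    then show ?thesis using t by simp
  qed
  then show ?thesis by auto
qed

lemma good_open:
  assumes "open S" "S \<noteq> {}" "small_set P" shows "\<exists>z\<in>S. z \<notin> local.span P"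
  using open_span[OF assms(1,2)] span_small[OF assms(3)] by blast

lemma seg1:
  assumes a: "a \<notin> local.span P" "a \<in> local.span Q" and PQ: "local.span P \<subseteq> local.span Q"
    and u: "u \<notin> local.span Q"
  shows "closed_segment a (a + c *\<^sub>R u) \<inter> local.span P = {}"
proof -
  { fix z assume z1: "z \<in> closed_segment a (a + c *\<^sub>R u)" and z2: "z \<in> local.span P"
    then obtain t where t: "z = (1 - t) *\<^sub>R a + t *\<^sub>R (a + c *\<^sub>R u)" unfolding closed_segment_def by auto
    then have z: "z = a + (t * c) *\<^sub>R u" by (simp add: algebra_simps)
    have tc: "t * c \<noteq> 0"
    proof
      assume "t * c = 0" then have "z = a" using z by simp
      then show False using a z2 by simp
    qed
    have "z - a \<in> local.span Q" using span_diff z2 PQ a(2) by blast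
    then have w: "(t * c) *\<^sub>R u \<in> local.span Q" using z by simp
    have "(1 / (t * c)) *\<^sub>R ((t * c) *\<^sub>R u) \<in> local.span Q" by (rule span_scaleR[OF w])
    then have False using tc u by simp }
  then show ?thesis by blast
qed

lemma seg2:
  assumes ab: "a \<in> local.span Q" "b \<in> local.span Q" and u: "u \<notin> local.span Q" and c: "c \<noteq> 0"
  shows "closed_segment (a + c *\<^sub>R u) (b + c *\<^sub>R u) \<inter> local.span Q = {}"
proof -
  { fix z assume z1: "z \<in> closed_segment (a + c *\<^sub>R u) (b + c *\<^sub>R u)" and z2: "z \<in> local.span Q"
    then obtain t where t: "z = (1 - t) *\<^sub>R (a + c *\<^sub>R u) + t *\<^sub>R (b + c *\<^sub>R u)"
      unfolding closed_segment_def by auto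
    then have z: "z = ((1 - t) *\<^sub>R a + t *\<^sub>R b) + c *\<^sub>R u" by (simp add: algebra_simps)
    have "(1 - t) *\<^sub>R a + t *\<^sub>R b \<in> local.span Q" using span_add span_scaleR ab by blast
    then have "z - ((1 - t) *\<^sub>R a + t *\<^sub>R b) \<in> local.span Q" using span_diff z2 by blast
    then have w: "c *\<^sub>R u \<in> local.span Q" using z by simp
    have "(1 / c) *\<^sub>R (c *\<^sub>R u) \<in> local.span Q" by (rule span_scaleR[OF w])
    then have False using c u by simp }
  then show ?thesis by blast
qed

lemma sep_good:
  assumes G: "open G" "convex G" and A: "open A" and B: "open B"
    and ga: "G \<inter> A \<noteq> {}" and gb: "G \<inter> B \<noteq> {}" and gab: "G \<inter> A \<inter> B = {}"
    and sm: "small_set P"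
  shows "\<exists>z \<in> G - (A \<union> B). z \<notin> local.span P"
proof (rule ccontr)
  assume "\<not> ?thesis"
  then have sub: "G - (A \<union> B) \<subseteq> local.span P" by blast
  obtain p where p: "p \<in> G \<inter> A" "p \<notin> local.span P"
    using good_open[of "G \<inter> A" P] G A ga sm by blast
  obtain q where q: "q \<in> G \<inter> B" "q \<notin> local.span P"
    using good_open[of "G \<inter> B" P] G B gb sm by blast
  define Q where "Q = insert p (insert q P)"
  have "small_set Q" unfolding Q_def by (intro small_insert sm)
  then obtain u where u: "u \<notin> local.span Q" using span_small by blast
  have pQ: "p \<in> local.span Q" "q \<in> local.span Q" unfolding Q_def by (auto intro: span_base)
  have PQ: "local.span P \<subseteq> local.span Q" unfolding Q_def by (intro span_mono) auto
  have u0: "u \<noteq> 0" using u span_zero by auto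
  obtain ep where ep: "ep > 0" "ball p ep \<subseteq> G" using G(1) p open_contains_ball by blast
  obtain eq where eq: "eq > 0" "ball q eq \<subseteq> G" using G(1) q open_contains_ball by blast
  define c where "c = min ep eq / (2 * norm u)"
  have c: "c > 0" using ep eq u0 by (simp add: c_def)
  have nc: "norm (c *\<^sub>R u) = min ep eq / 2" using c u0 ep eq by (simp add: c_def)
  have p'G: "p + c *\<^sub>R u \<in> G"
  proof -
    have "dist p (p + c *\<^sub>R u) < ep" using nc ep eq by (simp add: dist_norm)
    then show ?thesis using ep by auto
  qed
  have q'G: "q + c *\<^sub>R u \<in> G"
  proof -
    have "dist q (q + c *\<^sub>R u) < eq" using nc ep eq by (simp add: dist_norm)
    then show ?thesis using eq by auto
  qed
  define C1 where "C1 = closed_segment p (p + c *\<^sub>R u)"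
  define C2 where "C2 = closed_segment (p + c *\<^sub>R u) (q + c *\<^sub>R u)"
  define C3 where "C3 = closed_segment q (q + c *\<^sub>R u)"
  define C where "C = C1 \<union> C2 \<union> C3"
  have "connected (C1 \<union> C2)"
    unfolding C1_def C2_def by (rule connected_Un) auto
  then have conC: "connected C"
    unfolding C_def by (rule connected_Un) (auto simp: C2_def C3_def)
  have CG: "C \<subseteq> G" unfolding C_def C1_def C2_def C3_def
    using closed_segment_subset[OF _ _ G(2)] p q p'G q'G by auto
  have "C1 \<inter> local.span P = {}" unfolding C1_def by (rule seg1[OF p(2) pQ(1) PQ u])
  moreover have "C3 \<inter> local.span P = {}" unfolding C3_def by (rule seg1[OF q(2) pQ(2) PQ u])
  moreover have "C2 \<inter> local.span P = {}"
    using seg2[OF pQ u, of c] c PQ unfolding C2_def by auto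
  ultimately have "C \<inter> local.span P = {}" unfolding C_def by auto
  then have CAB: "C \<subseteq> A \<union> B" using CG sub by auto
  have "A \<inter> B \<inter> C = {}" using CG gab by auto
  moreover have "p \<in> A \<inter> C" "q \<in> B \<inter> C" using p q unfolding C_def C1_def C3_def by auto
  ultimately show False using conC CAB A B unfolding connected_def by blast
qed

lemma good:
  assumes F: "F \<in> fam" and sm: "small_set P" shows "\<exists>z\<in>F. z \<notin> local.span P"
proof -
  obtain G A B where F': "F = G - (A \<union> B)" and G: "open G" "convex G" and A: "open A" and B: "open B"
    and ne: "G \<noteq> {}"
    and cs: "(A = {} \<and> B = {}) \<or> (G \<inter> A \<noteq> {} \<and> G \<inter> B \<noteq> {} \<and> G \<inter> A \<inter> B = {})"
    using F unfolding fam_def by blast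
  show ?thesis
  proof (cases "A = {} \<and> B = {}")
    case True
    then show ?thesis using good_open[OF G(1) ne sm] F' by simp
  next
    case False
    then show ?thesis using sep_good[OF G A B _ _ _ sm] cs F' by blast
  qed
qed

lemma UNIV_sq: "(UNIV::'a set) \<times> (UNIV::'a set) \<approx> (UNIV::'a set)"
  using card_of_Times_same_infinite[OF inf_UNIV] eqpoll_iff_card_of_ordIso by blast

lemma fam_lepoll: "(fam::'a set set) \<lesssim> (UNIV::'a set)"
proof -
  let ?O = "{U::'a set. open U}"
  have "fam \<subseteq> (\<lambda>(G,A,B). G - (A \<union> B)) ` (?O \<times> ?O \<times> ?O)"
  proof
    fix F :: "'a set" assume "F \<in> fam"
    then obtain G A B where F': "F = G - (A \<union> B)" and "open G" "open A" "open B"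
      unfolding fam_def by blast
    then have "(G, A, B) \<in> ?O \<times> ?O \<times> ?O" "F = (\<lambda>(G,A,B). G - (A \<union> B)) (G, A, B)" by auto
    then show "F \<in> (\<lambda>(G,A,B). G - (A \<union> B)) ` (?O \<times> ?O \<times> ?O)" by (rule rev_image_eqI)
  qed
  then have "(fam::'a set set) \<lesssim> ?O \<times> ?O \<times> ?O" by (rule subset_image_lepoll)
  also have "?O \<times> ?O \<times> ?O \<approx> (UNIV::'a set) \<times> (UNIV::'a set) \<times> (UNIV::'a set)"
    by (rule times_eqpoll_cong[OF opens times_eqpoll_cong[OF opens opens]])
  also have "(UNIV::'a set) \<times> (UNIV::'a set) \<times> (UNIV::'a set) \<approx> (UNIV::'a set) \<times> (UNIV::'a set)"
    by (rule times_eqpoll_cong[OF eqpoll_refl UNIV_sq])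
  also have "(UNIV::'a set) \<times> (UNIV::'a set) \<approx> (UNIV::'a set)" by (rule UNIV_sq)
  finally show ?thesis .
qed

lemma main:
  "\<exists>\<B>::'a set set. \<B> \<approx> (UNIV::'a set set) \<and>
     (\<forall>B\<in>\<B>. hamel_basis sc B \<and> connected B \<and> locally connected B \<and> closure B = UNIV)"
proof -
  have "\<exists>g. (fam::'a set set) \<subseteq> g ` (UNIV::'a set)"
    using fam_lepoll by (simp only: lepoll_iff)
  then obtain g :: "'a \<Rightarrow> 'a set" where g: "(fam::'a set set) \<subseteq> g ` (UNIV::'a set)"
    by (elim exE)
  define E where "E a = (if g a \<in> fam then g a else UNIV)" for a
  have UNIVfam: "(UNIV::'a set) \<in> fam" by (rule fam_open) auto
  have Efam: "E a \<in> fam" for a unfolding E_def using UNIVfam by simp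
  have famE: "\<exists>a. F = E a" if "F \<in> fam" for F
  proof -
    have "F \<in> g ` UNIV" using g that by (rule subsetD)
    then obtain a where a: "F = g a" by (elim imageE) simp
    have "E a = F" unfolding E_def using a that by simp
    then show ?thesis by blast
  qed
  define r where "r = |UNIV::'a set|"
  have wo: "wo_rel r" unfolding r_def wo_rel_def by (rule card_of_Well_order)
  have Fr: "Field r = UNIV" unfolding r_def by simp
  define R where "R = r - Id"
  have wfR: "wf R" unfolding R_def by (rule wo_rel.WF[OF wo])
  define Prev where "Prev h a = (fst \<circ> h) ` underS r a \<union> (snd \<circ> h) ` underS r a"
    for h :: "'a \<Rightarrow> 'a \<times> 'a" and a
  define step where "step h a = (SOME uv. fst uv \<in> E a \<and> snd uv \<in> E a \<and>
      fst uv \<notin> local.span (Prev h a) \<and> snd uv \<notin> local.span (insert (fst uv) (Prev h a)))"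
    for h :: "'a \<Rightarrow> 'a \<times> 'a" and a
  define f where "f = wfrec R step"
  have fa: "f a = step f a" for a
  proof -
    have 1: "f a = step (cut f R a) a" unfolding f_def by (rule wfrec[OF wfR])
    have c: "cut f R a b = f b" if "b \<in> underS r a" for b
      using that unfolding cut_def R_def underS_def by auto
    have "(fst \<circ> cut f R a) ` underS r a = (fst \<circ> f) ` underS r a"
      by (rule image_cong) (auto simp: c)
    moreover have "(snd \<circ> cut f R a) ` underS r a = (snd \<circ> f) ` underS r a"
      by (rule image_cong) (auto simp: c)
    ultimately have "Prev (cut f R a) a = Prev f a" unfolding Prev_def by simp
    then show ?thesis using 1 unfolding step_def by simp
  qed
  have smallPrev: "small_set (Prev h a)" for h a
    unfolding Prev_def r_def by (intro small_Un small_image small_underS)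
  have props: "fst (f a) \<in> E a \<and> snd (f a) \<in> E a \<and> fst (f a) \<notin> local.span (Prev f a) \<and>
      snd (f a) \<notin> local.span (insert (fst (f a)) (Prev f a))" for a
  proof -
    obtain u where u: "u \<in> E a" "u \<notin> local.span (Prev f a)"
      using good[OF Efam smallPrev] by blast
    obtain v where v: "v \<in> E a" "v \<notin> local.span (insert u (Prev f a))"
      using good[OF Efam small_insert[OF smallPrev]] by blast
    have ex: "\<exists>uv. fst uv \<in> E a \<and> snd uv \<in> E a \<and>
      fst uv \<notin> local.span (Prev f a) \<and> snd uv \<notin> local.span (insert (fst uv) (Prev f a))"
      using u v by (intro exI[of _ "(u,v)"]) simp
    have "fst (step f a) \<in> E a \<and> snd (step f a) \<in> E a \<and> fst (step f a) \<notin> local.span (Prev f a) \<and>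
      snd (step f a) \<notin> local.span (insert (fst (step f a)) (Prev f a))"
      unfolding step_def by (rule someI_ex[OF ex])
    then show ?thesis using fa[of a] by simp
  qed
  define x where "x a = fst (f a)" for a
  define y where "y a = snd (f a)" for a
  have Pv: "Prev f a = x ` underS r a \<union> y ` underS r a" for a
    unfolding Prev_def x_def y_def comp_def by simp
  have xE: "x a \<in> E a" "y a \<in> E a" for a using props[of a] unfolding x_def y_def by auto
  have xn: "x a \<notin> local.span (Prev f a)" for a using props[of a] unfolding x_def y_def by auto
  have yn: "y a \<notin> local.span (insert (x a) (Prev f a))" for a
    using props[of a] unfolding x_def y_def by auto
  have xn': "x a \<notin> Prev f a" for a using xn[of a] span_superset by blast
  have yn': "y a \<notin> insert (x a) (Prev f a)" for a using yn[of a] span_superset by blast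
  have inP: "x b \<in> Prev f a" "y b \<in> Prev f a" if "(b, a) \<in> r" "b \<noteq> a" for a b
    using that unfolding Pv underS_def by auto
  have tot: "(a, b) \<in> r \<or> (b, a) \<in> r" for a b using wo_rel.TOTALS[OF wo] Fr by auto
  have xinj: "inj x"
  proof (rule injI)
    fix a b assume e: "x a = x b"
    show "a = b"
    proof (rule ccontr)
      assume ne: "a \<noteq> b"
      from tot[of a b] show False
      proof
        assume "(a, b) \<in> r" then have "x a \<in> Prev f b" using inP ne by auto
        then show False using xn'[of b] e by simp
      next
        assume "(b, a) \<in> r" then have "x b \<in> Prev f a" using inP ne by auto
        then show False using xn'[of a] e by simp
      qed
    qed
  qed
  have yinj: "inj y"
  proof (rule injI)
    fix a b assume e: "y a = y b"
    show "a = b"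
    proof (rule ccontr)
      assume ne: "a \<noteq> b"
      from tot[of a b] show False
      proof
        assume "(a, b) \<in> r" then have "y a \<in> Prev f b" using inP ne by auto
        then show False using yn'[of b] e by simp
      next
        assume "(b, a) \<in> r" then have "y b \<in> Prev f a" using inP ne by auto
        then show False using yn'[of a] e by simp
      qed
    qed
  qed
  have xy: "x a \<noteq> y b" for a b
  proof
    assume e: "x a = y b"
    consider "a = b" | "(a, b) \<in> r" "a \<noteq> b" | "(b, a) \<in> r" "a \<noteq> b" using tot by blast
    then show False
    proof cases
      case 1 then show False using yn'[of b] e by simp
    next
      case 2 then have "x a \<in> Prev f b" using inP by auto
      then show False using yn'[of b] e by simp
    next
      case 3 then have "y b \<in> Prev f a" using inP by auto
      then show False using xn'[of a] e by simp
    qed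
  qed
  define Z where "Z = range x \<union> range y"
  have finind: "local.independent T" if "finite T" "T \<subseteq> Z" for T
    using that
  proof (induction "card T" arbitrary: T rule: less_induct)
    case less
    show ?case
    proof (cases "T = {}")
      case True then show ?thesis using independent_empty by simp
    next
      case False
      define A where "A = x -` T \<union> y -` T"
      have finA: "finite A" unfolding A_def using less.prems xinj yinj by (auto intro: finite_vimageI)
      have neA: "A \<noteq> {}"
      proof -
        obtain w where w: "w \<in> T" using False by blast
        then have "w \<in> range x \<union> range y" using less.prems unfolding Z_def by blast
        then obtain b where "w = x b \<or> w = y b" by blast
        then have "b \<in> A" using w unfolding A_def by auto
        then show ?thesis by blast
      qed
      obtain m where m: "m \<in> A" "\<forall>b\<in>A. (b, m) \<in> r" using wo_max[OF wo Fr finA neA] by blast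
      define z where "z = (if y m \<in> T then y m else x m)"
      have zT: "z \<in> T" using m(1) unfolding z_def A_def by auto
      define W where "W = (if y m \<in> T then insert (x m) (Prev f m) else Prev f m)"
      have sub: "T - {z} \<subseteq> W"
      proof
        fix w assume w: "w \<in> T - {z}"
        then have "w \<in> Z" using less.prems by auto
        then obtain b where b: "w = x b \<or> w = y b" unfolding Z_def by auto
        then have bA: "b \<in> A" using w unfolding A_def by auto
        then have bm: "(b, m) \<in> r" using m by auto
        show "w \<in> W"
        proof (cases "b = m")
          case False
          then show ?thesis using inP[OF bm False] b unfolding W_def by auto
        next
          case True
          then show ?thesis using b w unfolding W_def z_def by (auto split: if_splits)
        qed
      qed
      have zW: "z \<notin> local.span W" unfolding z_def W_def using xn yn by auto
      have zs: "z \<notin> local.span (T - {z})" using zW span_mono[OF sub] by blast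
      have "card (T - {z}) < card T" using card_Diff1_less[OF less.prems(1) zT] .
      then have iT: "local.independent (T - {z})"
        using less(1)[of "T - {z}"] less.prems by auto
      have "local.independent (insert z (T - {z}))"
        by (subst independent_insert) (use zs iT in simp)
      moreover have "insert z (T - {z}) = T" using zT by auto
      ultimately show ?thesis by simp
    qed
  qed
  have indZ: "local.independent Z"
  proof
    assume "local.dependent Z"
    then obtain z where z: "z \<in> Z" "z \<in> local.span (Z - {z})" unfolding dependent_def by blast
    obtain t where t: "finite t" "t \<subseteq> Z - {z}" "z \<in> local.span t" using span_fin[OF z(2)] by blast
    have e: "insert z t - {z} = t" using t by auto
    have zi: "z \<in> insert z t" by simp
    have "z \<in> local.span (insert z t - {z})" unfolding e by (rule t(3))
    then have "local.dependent (insert z t)"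
      unfolding dependent_def using zi by blast
    moreover have "local.independent (insert z t)" using finind[of "insert z t"] t z by auto
    ultimately show False by simp
  qed
  have z0: "0 \<notin> Z" using indZ dependent_zero by blast
  have notZ: "c *\<^sub>R v \<notin> Z" if v: "v \<in> Z" and c: "c \<noteq> 0" "c \<noteq> 1" for v c
  proof
    assume cv: "c *\<^sub>R v \<in> Z"
    have v0: "v \<noteq> 0" using v z0 by auto
    have "c *\<^sub>R v \<noteq> v"
    proof
      assume "c *\<^sub>R v = v" then have "(c - 1) *\<^sub>R v = 0" by (simp add: algebra_simps)
      then show False using c v0 by simp
    qed
    then have "c *\<^sub>R v \<in> Z - {v}" using cv by auto
    then have "c *\<^sub>R v \<in> local.span (Z - {v})" by (rule span_base)
    then have "(1/c) *\<^sub>R (c *\<^sub>R v) \<in> local.span (Z - {v})" by (rule span_scaleR)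
    then have "v \<in> local.span (Z - {v})" using c by simp
    then have "local.dependent Z" unfolding dependent_def using v by blast
    then show False using indZ by simp
  qed
  have spanC: "local.span (UNIV - Z) = UNIV"
  proof -
    have "v \<in> local.span (UNIV - Z)" for v
    proof (cases "v \<in> Z")
      case False then show ?thesis by (auto intro: span_base)
    next
      case True
      have "3 *\<^sub>R v \<in> local.span (UNIV - Z)" "2 *\<^sub>R v \<in> local.span (UNIV - Z)"
        using notZ[of v 3] notZ[of v 2] True by (auto intro: span_base)
      then have "3 *\<^sub>R v - 2 *\<^sub>R v \<in> local.span (UNIV - Z)" by (rule span_diff)
      moreover have "3 *\<^sub>R v - 2 *\<^sub>R v = (3 - 2 :: real) *\<^sub>R v" by (simp only: scaleR_left_diff_distrib)
      ultimately show ?thesis by simp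
    qed
    then show ?thesis by auto
  qed
  define D where "D S = x ` S \<union> y ` (- S)" for S
  define V where "V S = D S \<union> (UNIV - Z)" for S
  have DZ: "D S \<subseteq> Z" for S unfolding D_def Z_def by auto
  have exB: "\<exists>B. D S \<subseteq> B \<and> B \<subseteq> V S \<and> hamel_basis sc B" for S
  proof -
    have DV: "D S \<subseteq> V S" unfolding V_def by auto
    have iD: "local.independent (D S)" using independent_mono[OF indZ DZ] .
    obtain B where B: "D S \<subseteq> B" "B \<subseteq> V S" "local.independent B" "V S \<subseteq> local.span B"
      using maximal_independent_subset_extend[OF DV iD] by blast
    have "UNIV - Z \<subseteq> V S" unfolding V_def by auto
    then have "UNIV - Z \<subseteq> local.span B" using B(4) by auto
    then have "local.span (UNIV - Z) \<subseteq> local.span (local.span B)" by (rule span_mono)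
    then have "local.span B = UNIV" using spanC span_span by auto
    then show ?thesis using B unfolding hamel_basis_def by auto
  qed
  define Phi where "Phi S = (SOME B. D S \<subseteq> B \<and> B \<subseteq> V S \<and> hamel_basis sc B)" for S
  have Phi: "D S \<subseteq> Phi S \<and> Phi S \<subseteq> V S \<and> hamel_basis sc (Phi S)" for S
    unfolding Phi_def by (rule someI_ex[OF exB])
  have PhiZ: "Phi S \<inter> Z = D S" for S using Phi[of S] DZ[of S] unfolding V_def by auto
  have memD: "x a \<in> D S \<longleftrightarrow> a \<in> S" for a S
    unfolding D_def using xinj xy by (auto simp: inj_eq)
  have injPhi: "inj Phi"
  proof (rule injI)
    fix S S' assume "Phi S = Phi S'"
    then have "D S = D S'" using PhiZ by metis
    then show "S = S'" using memD by blast
  qed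
  have meets: "\<forall>F\<in>fam. Phi S \<inter> F \<noteq> {}" for S
  proof
    fix F :: "'a set" assume F: "F \<in> fam"
    obtain a where a: "F = E a" using famE[OF F] by (elim exE)
    show "Phi S \<inter> F \<noteq> {}"
    proof (cases "a \<in> S")
      case True then have "x a \<in> Phi S" using Phi[of S] unfolding D_def by auto
      then show ?thesis using xE a by auto
    next
      case False then have "y a \<in> Phi S" using Phi[of S] unfolding D_def by auto
      then show ?thesis using xE a by auto
    qed
  qed
  show ?thesis
  proof (rule exI[of _ "range Phi"], rule conjI)
    show "range Phi \<approx> (UNIV::'a set set)" by (rule inj_on_image_eqpoll_self[OF injPhi])
    show "\<forall>B\<in>range Phi. hamel_basis sc B \<and> connected B \<and> locally connected B \<and> closure B = UNIV"
    proof
      fix B assume "B \<in> range Phi"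
      then obtain S where "B = Phi S" by auto
      then show "hamel_basis sc B \<and> connected B \<and> locally connected B \<and> closure B = UNIV"
        using Phi[of S] meets_good[OF meets[of S]] by auto
    qed
  qed
qed

end

lemma real_case:
  assumes "\<not> (\<exists>B. finite B \<and> hamel_basis (scaleR :: real \<Rightarrow> 'a::real_normed_vector \<Rightarrow> 'a) B)"
    and "{U::'a set. open U} \<approx> (UNIV :: 'a set)"
    and "hamel_basis (scaleR :: real \<Rightarrow> 'a \<Rightarrow> 'a) H" and "H \<approx> (UNIV :: 'a set)"
  shows "\<exists>\<B>::'a set set. \<B> \<approx> (UNIV :: 'a set set)
                \<and> (\<forall>B\<in>\<B>. hamel_basis (scaleR :: real \<Rightarrow> 'a \<Rightarrow> 'a) B \<and> connected B
                          \<and> locally connected B \<and> closure B = UNIV)"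
proof -
  have "gs scaleR (\<lambda>r::real. r) H"
    unfolding gs_def gs_axioms_def using assms real_vector.vector_space_axioms by auto
  then show ?thesis by (rule gs.main)
qed

lemma complex_case:
  fixes sc :: "complex \<Rightarrow> 'b::real_normed_vector \<Rightarrow> 'b"
  assumes "complex_normed_structure sc"
    and "\<not> (\<exists>B. finite B \<and> hamel_basis sc B)"
    and "{U::'b set. open U} \<approx> (UNIV :: 'b set)"
    and "hamel_basis sc H" and "H \<approx> (UNIV :: 'b set)"
  shows "\<exists>\<B>::'b set set. \<B> \<approx> (UNIV :: 'b set set)
                \<and> (\<forall>B\<in>\<B>. hamel_basis sc B \<and> connected B
                          \<and> locally connected B \<and> closure B = UNIV)"
proof -
  have "gs sc complex_of_real H"
    using assms unfolding gs_def gs_axioms_def complex_normed_structure_def by auto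
  then show ?thesis by (rule gs.main)
qed

theorem theorem2:
  shows "(\<not> (\<exists>B. finite B \<and> hamel_basis (scaleR :: real \<Rightarrow> 'a::real_normed_vector \<Rightarrow> 'a) B)
          \<and> {U::'a set. open U} \<approx> (UNIV :: 'a set)
          \<and> (\<exists>B. hamel_basis (scaleR :: real \<Rightarrow> 'a \<Rightarrow> 'a) B \<and> B \<approx> (UNIV :: 'a set))
          \<longrightarrow> (\<exists>\<B>::'a set set. \<B> \<approx> (UNIV :: 'a set set)
                \<and> (\<forall>B\<in>\<B>. hamel_basis (scaleR :: real \<Rightarrow> 'a \<Rightarrow> 'a) B \<and> connected B
                          \<and> locally connected B \<and> closure B = UNIV)))
   \<and> (\<forall>sc :: complex \<Rightarrow> 'b::real_normed_vector \<Rightarrow> 'b.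
          complex_normed_structure sc
          \<and> \<not> (\<exists>B. finite B \<and> hamel_basis sc B)
          \<and> {U::'b set. open U} \<approx> (UNIV :: 'b set)
          \<and> (\<exists>B. hamel_basis sc B \<and> B \<approx> (UNIV :: 'b set))
          \<longrightarrow> (\<exists>\<B>::'b set set. \<B> \<approx> (UNIV :: 'b set set)
                \<and> (\<forall>B\<in>\<B>. hamel_basis sc B \<and> connected B
                          \<and> locally connected B \<and> closure B = UNIV)))"
  apply (intro conjI allI impI)
   apply (elim conjE exE)
   apply (rule real_case; assumption)
  apply (elim conjE exE)
  apply (rule complex_case; assumption)
  done

end
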